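(* Let $f\in\mathbb Z[x,x^{-1}]$ be a nonzero hyperbolic Laurent polynomial. Then there exists a natural number $N$ such that $B_\infty(N)+f\cdot\mathbb Z_{ac}[x)=\mathbb Z_{ac}[x)$, where for $k\in\mathbb N$, $B_k(N)=\{\sum_ia_ix^i:|a_i|\le N\text{ for all }i,\ a_i\in\mathbb Z,\ a_i=0\text{ for }i<-k\}$ and $B_\infty(N)=\bigcup_kB_k(N)$.
   Context: A formal Laurent series $\sum c_nx^n$ is almost convergent if $\limsup_{n\to\infty}|c_n|^{1/n}\le1$ and $\limsup_{n\to\infty}|c_{-n}|^{1/n}\le1$; $\mathbb Z_{ac}[x)$ denotes the almost convergent series with integer coefficients having only finitely many nonzero coefficients at negative powers of $x$. A Laurent polynomial is hyperbolic if it has no complex root on the unit circle. *)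

theory Defs
  imports Complex_Main "HOL-Library.Extended_Real" "HOL-Library.Liminf_Limsup"
begin

text \<open>Formal (bi-infinite) Laurent series with integer coefficients are
  represented by their coefficient functions  int => int.\<close>

definition almost_convergent :: "(int \<Rightarrow> int) \<Rightarrow> bool" where
  "almost_convergent c \<longleftrightarrow>
     limsup (\<lambda>n::nat. ereal (root n \<bar>real_of_int (c (int n))\<bar>)) \<le> 1 \<and>
     limsup (\<lambda>n::nat. ereal (root n \<bar>real_of_int (c (- int n))\<bar>)) \<le> 1"

definition Zac :: "(int \<Rightarrow> int) set" where
  "Zac = {c. almost_convergent c \<and> (\<exists>k::int. \<forall>i<k. c i = 0)}"

definition laurent_poly :: "(int \<Rightarrow> int) \<Rightarrow> bool" where
  "laurent_poly f \<longleftrightarrow> finite {i. f i \<noteq> 0}"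

definition lp_eval :: "(int \<Rightarrow> int) \<Rightarrow> complex \<Rightarrow> complex" where
  "lp_eval f z = (\<Sum>i\<in>{i. f i \<noteq> 0}. of_int (f i) * z powi i)"

definition hyperbolic :: "(int \<Rightarrow> int) \<Rightarrow> bool" where
  "hyperbolic f \<longleftrightarrow> (\<forall>z::complex. cmod z = 1 \<longrightarrow> lp_eval f z \<noteq> 0)"

definition lp_mult :: "(int \<Rightarrow> int) \<Rightarrow> (int \<Rightarrow> int) \<Rightarrow> (int \<Rightarrow> int)" where
  "lp_mult f g = (\<lambda>n. \<Sum>i\<in>{i. f i \<noteq> 0}. f i * g (n - i))"

definition B :: "nat \<Rightarrow> nat \<Rightarrow> (int \<Rightarrow> int) set" where
  "B k N = {a. (\<forall>i. \<bar>a i\<bar> \<le> int N) \<and> (\<forall>i < - int k. a i = 0)}"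

definition B_inf :: "nat \<Rightarrow> (int \<Rightarrow> int) set" where
  "B_inf N = (\<Union>k. B k N)"

end

theory Submission
  imports Defs "HOL-Computational_Algebra.Fundamental_Theorem_Algebra"
begin


definition wt :: "real \<Rightarrow> real \<Rightarrow> int \<Rightarrow> real" where
  "wt \<rho> q n = (if 0 \<le> n then q ^ nat n else \<rho> ^ nat (-n))"

definition SG :: "(int \<Rightarrow> complex) \<Rightarrow> bool" where
  "SG s \<longleftrightarrow> (\<exists>\<rho>. 0 < \<rho> \<and> \<rho> < 1 \<and> (\<forall>q>1. \<exists>C. \<forall>n. cmod (s n) \<le> C * wt \<rho> q n))"

lemma wt_pos: "0 < \<rho> \<Longrightarrow> 0 < q \<Longrightarrow> 0 < wt \<rho> q n"
  by (simp add: wt_def)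

lemma wt_step_mono:
  assumes "0 < \<rho>" "\<rho> \<le> 1" "1 \<le> q"
  shows "wt \<rho> q n \<le> wt \<rho> q (n+1)"
proof (cases "0 \<le> n")
  case True
  then have "nat (n+1) = Suc (nat n)" by simp
  then show ?thesis using True assms by (simp add: wt_def)
next
  case False
  show ?thesis
  proof (cases "n = -1")
    case True then show ?thesis using assms by (simp add: wt_def)
  next
    case F2: False
    then have "nat (-n) = Suc (nat (-(n+1)))" using False by simp
    then show ?thesis using False F2 assms
      by (simp add: wt_def mult_left_le_one_le)
  qed
qed

lemma wt_mono:
  assumes "0 < \<rho>" "\<rho> \<le> 1" "1 \<le> q" "m \<le> n"
  shows "wt \<rho> q m \<le> wt \<rho> q n"
proof -
  obtain k where k: "n = m + int k" using assms(4) by (metis le_iff_add nat_int_add zle_iff_zadd)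
  have "wt \<rho> q m \<le> wt \<rho> q (m + int k)" for k
  proof (induction k)
    case 0 then show ?case by simp
  next
    case (Suc k)
    have "wt \<rho> q (m + int k) \<le> wt \<rho> q (m + int k + 1)" by (rule wt_step_mono[OF assms(1-3)])
    then show ?case using Suc by (simp add: add_ac)
  qed
  then show ?thesis using k by simp
qed

lemma wt_step:
  assumes "0 < \<rho>" "\<rho> \<le> 1" "1 \<le> q"
  shows "wt \<rho> q (n+1) \<le> max q (1/\<rho>) * wt \<rho> q n"
proof (cases "0 \<le> n")
  case True
  then have "nat (n+1) = Suc (nat n)" by simp
  then have "wt \<rho> q (n+1) = q * wt \<rho> q n" using True by (simp add: wt_def)
  also have "\<dots> \<le> max q (1/\<rho>) * wt \<rho> q n"
    by (rule mult_right_mono) (use wt_pos[of \<rho> q n] assms in auto)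
  finally show ?thesis .
next
  case False
  show ?thesis
  proof (cases "n = -1")
    case True 
    have "1 \<le> (1/\<rho>) * \<rho>" using assms by simp
    also have "\<dots> \<le> max q (1/\<rho>) * \<rho>" using assms by (intro mult_right_mono) auto
    finally show ?thesis using True by (simp add: wt_def)
  next
    case F2: False
    then have e: "nat (-n) = Suc (nat (-(n+1)))" using False by simp
    have "wt \<rho> q (n+1) = (1/\<rho>) * wt \<rho> q n" using False F2 assms e by (simp add: wt_def)
    also have "\<dots> \<le> max q (1/\<rho>) * wt \<rho> q n"
      by (rule mult_right_mono) (use wt_pos[of \<rho> q n] assms in auto)
    finally show ?thesis .
  qed
qed

lemma wt_shift:
  assumes "0 < \<rho>" "\<rho> \<le> 1" "1 \<le> q"
  shows "wt \<rho> q (n + int k) \<le> max q (1/\<rho>) ^ k * wt \<rho> q n"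
proof (induction k)
  case 0 then show ?case by simp
next
  case (Suc k)
  have "wt \<rho> q (n + int (Suc k)) = wt \<rho> q ((n + int k) + 1)" by (simp add: add_ac)
  also have "\<dots> \<le> max q (1/\<rho>) * wt \<rho> q (n + int k)" by (rule wt_step[OF assms])
  also have "\<dots> \<le> max q (1/\<rho>) * (max q (1/\<rho>) ^ k * wt \<rho> q n)"
    by (rule mult_left_mono[OF Suc]) (use assms in auto)
  finally show ?case by (simp add: mult.assoc add_ac)
qed

lemma wt_mono_rho: "0 < \<rho> \<Longrightarrow> \<rho> \<le> \<rho>' \<Longrightarrow> wt \<rho> q n \<le> wt \<rho>' q n"
  by (simp add: wt_def power_mono)

lemma wt_mono_q: "1 \<le> q \<Longrightarrow> q \<le> q' \<Longrightarrow> wt \<rho> q n \<le> wt \<rho> q' n"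
  by (simp add: wt_def power_mono)

lemma SG_D:
  assumes "SG s"
  obtains \<rho> where "0 < \<rho>" "\<rho> < 1" "\<And>q. q > 1 \<Longrightarrow> \<exists>C\<ge>0. \<forall>n. cmod (s n) \<le> C * wt \<rho> q n"
proof -
  obtain \<rho> where r: "0 < \<rho>" "\<rho> < 1" "\<forall>q>1. \<exists>C. \<forall>n. cmod (s n) \<le> C * wt \<rho> q n"
    using assms unfolding SG_def by blast
  have "\<exists>C\<ge>0. \<forall>n. cmod (s n) \<le> C * wt \<rho> q n" if qq: "q > 1" for q
  proof -
    obtain C where C: "\<forall>n. cmod (s n) \<le> C * wt \<rho> q n" using r(3) qq by blast
    have "cmod (s n) \<le> \<bar>C\<bar> * wt \<rho> q n" for n
    proof -
      have "C * wt \<rho> q n \<le> \<bar>C\<bar> * wt \<rho> q n"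
        by (rule mult_right_mono) (use wt_pos[of \<rho> q n] r qq in auto)
      then show ?thesis using C by (meson order_trans)
    qed
    then show ?thesis by (intro exI[of _ "\<bar>C\<bar>"]) auto
  qed
  then show ?thesis using r that by blast
qed

lemma SG_mono_rho:
  assumes "0 < \<rho>" "\<rho> \<le> \<rho>'" "C \<ge> 0" "\<forall>n. cmod (s n) \<le> C * wt \<rho> q n"
  shows "\<forall>n. cmod (s n) \<le> C * wt \<rho>' q n"
  using assms by (meson mult_left_mono order_trans wt_mono_rho)

lemma SG_add:
  assumes "SG s" "SG t"
  shows "SG (\<lambda>n. s n + t n)"
proof -
  obtain \<rho>1 where r1: "0 < \<rho>1" "\<rho>1 < 1" "\<And>q. q > 1 \<Longrightarrow> \<exists>C\<ge>0. \<forall>n. cmod (s n) \<le> C * wt \<rho>1 q n"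
    using SG_D[OF assms(1)] by blast
  obtain \<rho>2 where r2: "0 < \<rho>2" "\<rho>2 < 1" "\<And>q. q > 1 \<Longrightarrow> \<exists>C\<ge>0. \<forall>n. cmod (t n) \<le> C * wt \<rho>2 q n"
    using SG_D[OF assms(2)] by blast
  define \<rho> where "\<rho> = max \<rho>1 \<rho>2"
  have "\<exists>C. \<forall>n. cmod (s n + t n) \<le> C * wt \<rho> q n" if q: "q > 1" for q
  proof -
    obtain C1 where C1: "C1 \<ge> 0" "\<forall>n. cmod (s n) \<le> C1 * wt \<rho>1 q n" using r1(3)[OF q] by blast
    obtain C2 where C2: "C2 \<ge> 0" "\<forall>n. cmod (t n) \<le> C2 * wt \<rho>2 q n" using r2(3)[OF q] by blast
    have a: "\<forall>n. cmod (s n) \<le> C1 * wt \<rho> q n" by (rule SG_mono_rho[OF r1(1) _ C1]) (simp add: \<rho>_def)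
    have b: "\<forall>n. cmod (t n) \<le> C2 * wt \<rho> q n" by (rule SG_mono_rho[OF r2(1) _ C2]) (simp add: \<rho>_def)
    have "cmod (s n + t n) \<le> (C1 + C2) * wt \<rho> q n" for n
      using norm_triangle_ineq[of "s n" "t n"] a b by (simp add: distrib_right) (smt (verit))
    then show ?thesis by blast
  qed
  moreover have "0 < \<rho>" "\<rho> < 1" using r1 r2 by (auto simp: \<rho>_def)
  ultimately show ?thesis unfolding SG_def by blast
qed

lemma SG_scale:
  assumes "SG s"
  shows "SG (\<lambda>n. c * s n)"
proof -
  obtain \<rho> where r: "0 < \<rho>" "\<rho> < 1" "\<And>q. q > 1 \<Longrightarrow> \<exists>C\<ge>0. \<forall>n. cmod (s n) \<le> C * wt \<rho> q n"
    using SG_D[OF assms(1)] by blast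
  have "\<exists>C. \<forall>n. cmod (c * s n) \<le> C * wt \<rho> q n" if q: "q > 1" for q
  proof -
    obtain C where C: "C \<ge> 0" "\<forall>n. cmod (s n) \<le> C * wt \<rho> q n" using r(3)[OF q] by blast
    have "cmod (c * s n) \<le> (cmod c * C) * wt \<rho> q n" for n
      using C mult_left_mono[of "cmod (s n)" "C * wt \<rho> q n" "cmod c"]
      by (simp add: norm_mult mult.assoc)
    then show ?thesis by blast
  qed
  then show ?thesis using r unfolding SG_def by blast
qed

lemma SG_zero: "SG (\<lambda>n. 0)"
  unfolding SG_def by (intro exI[of _ "1/2"]) (auto intro!: exI[of _ 0])

lemma SG_sum:
  assumes "finite A" "\<And>i. i \<in> A \<Longrightarrow> SG (F i)"
  shows "SG (\<lambda>n. \<Sum>i\<in>A. F i n)"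
  using assms
proof (induction A rule: finite_induct)
  case empty then show ?case by (simp add: SG_zero)
next
  case (insert x A)
  then show ?case by (simp add: SG_add)
qed

lemma SG_shift:
  assumes "SG s"
  shows "SG (\<lambda>n. s (n + d))"
proof -
  obtain \<rho> where r: "0 < \<rho>" "\<rho> < 1" "\<And>q. q > 1 \<Longrightarrow> \<exists>C\<ge>0. \<forall>n. cmod (s n) \<le> C * wt \<rho> q n"
    using SG_D[OF assms(1)] by blast
  have "\<exists>C. \<forall>n. cmod (s (n + d)) \<le> C * wt \<rho> q n" if q: "q > 1" for q
  proof -
    obtain C where C: "C \<ge> 0" "\<forall>n. cmod (s n) \<le> C * wt \<rho> q n" using r(3)[OF q] by blast
    define K where "K = max q (1/\<rho>) ^ nat d"
    have "wt \<rho> q (n + d) \<le> K * wt \<rho> q n" for n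
    proof (cases "0 \<le> d")
      case True
      then have "n + d = n + int (nat d)" by simp
      then show ?thesis using wt_shift[of \<rho> q n "nat d"] r q by (simp add: K_def)
    next
      case False
      then have "wt \<rho> q (n + d) \<le> wt \<rho> q n" using r q by (intro wt_mono) auto
      then show ?thesis using False by (simp add: K_def)
    qed
    then have "cmod (s (n + d)) \<le> (C * K) * wt \<rho> q n" for n
      using C mult_left_mono[of "wt \<rho> q (n + d)" "K * wt \<rho> q n" C] 
      by (metis mult.assoc order_trans)
    then show ?thesis by blast
  qed
  then show ?thesis using r unfolding SG_def by blast
qed



lemma geo_bound:
  fixes f :: "nat \<Rightarrow> complex"
  assumes "\<And>m. cmod (f m) \<le> K * r ^ m" "0 \<le> r" "r < 1"
  shows "summable f \<and> cmod (suminf f) \<le> K / (1 - r)"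
proof -
  have sg: "summable (\<lambda>m. K * r ^ m)" by (intro summable_mult summable_geometric) (use assms in auto)
  have sn: "summable (\<lambda>m. cmod (f m))" by (rule summable_comparison_test'[OF sg]) (use assms in auto)
  have sf: "summable f" by (rule summable_comparison_test'[OF sg]) (use assms in auto)
  have "cmod (suminf f) \<le> (\<Sum>m. cmod (f m))" by (rule summable_norm[OF sn])
  also have "\<dots> \<le> (\<Sum>m. K * r ^ m)" by (rule suminf_le[OF _ sn sg]) (use assms in auto)
  also have "\<dots> = K / (1 - r)" using suminf_geometric[of r] assms by (simp add: suminf_mult)
  finally show ?thesis using sf by simp
qed

lemma div_big:
  assumes "SG s" "cmod \<alpha> > 1"
  shows "\<exists>t. SG t \<and> (\<forall>n. t (n - 1) - \<alpha> * t n = s n)"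
proof -
  obtain \<rho> where r: "0 < \<rho>" "\<rho> < 1" "\<And>q. q > 1 \<Longrightarrow> \<exists>C\<ge>0. \<forall>n. cmod (s n) \<le> C * wt \<rho> q n"
    using SG_D[OF assms(1)] by blast
  define \<beta> where "\<beta> = 1 / cmod \<alpha>"
  have b: "0 < \<beta>" "\<beta> < 1" using assms(2) by (auto simp: \<beta>_def divide_less_eq)
  define G where "G n m = s (n - int m) * (1/\<alpha>) ^ Suc m" for n m
  define t where "t n = - (\<Sum>m. G n m)" for n
  have key: "summable (G n) \<and> cmod (suminf (G n)) \<le> (C * wt \<rho> q n * \<beta>) / (1 - \<beta>)"
    if q: "q > 1" and C: "C \<ge> 0" "\<forall>n. cmod (s n) \<le> C * wt \<rho> q n" for q C n
  proof (rule geo_bound)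
    fix m
    have "wt \<rho> q (n - int m) \<le> wt \<rho> q n" using r q by (intro wt_mono) auto
    then have "cmod (s (n - int m)) \<le> C * wt \<rho> q n" using C by (meson mult_left_mono order_trans)
    then have "cmod (s (n - int m)) * \<beta> ^ Suc m \<le> C * wt \<rho> q n * \<beta> ^ Suc m"
      using b by (intro mult_right_mono) auto
    then show "cmod (G n m) \<le> C * wt \<rho> q n * \<beta> * \<beta> ^ m"
      by (simp add: G_def norm_mult norm_power \<beta>_def norm_divide mult_ac)
  qed (use b in auto)
  obtain C2 where C2: "C2 \<ge> 0" "\<forall>n. cmod (s n) \<le> C2 * wt \<rho> 2 n" using r(3)[of 2] by auto
  have sG: "summable (G n)" for n using key[of 2 C2 n] C2 by auto
  have "\<exists>C. \<forall>n. cmod (t n) \<le> C * wt \<rho> q n" if q: "q > 1" for q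
  proof -
    obtain C where C: "C \<ge> 0" "\<forall>n. cmod (s n) \<le> C * wt \<rho> q n" using r(3)[OF q] by blast
    have "cmod (t n) \<le> (C * \<beta> / (1 - \<beta>)) * wt \<rho> q n" for n
      using key[OF q C, of n] by (simp add: t_def mult_ac)
    then show ?thesis by blast
  qed
  then have "SG t" using r unfolding SG_def by blast
  moreover have "t (n - 1) - \<alpha> * t n = s n" for n
  proof -
    define F where "F m = s (n - int m) * (1/\<alpha>) ^ m" for m
    have a0: "\<alpha> \<noteq> 0" using assms(2) by auto
    have FG: "F m = \<alpha> * G n m" for m using a0 by (simp add: F_def G_def)
    have sF: "summable F" unfolding FG[abs_def] by (intro summable_mult sG)
    have "(\<Sum>m. F (Suc m)) = suminf F - F 0" by (rule suminf_split_head[OF sF])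
    moreover have "F (Suc m) = G (n - 1) m" for m by (simp add: F_def G_def algebra_simps)
    moreover have "suminf F = \<alpha> * suminf (G n)" unfolding FG[abs_def] by (rule suminf_mult[OF sG])
    moreover have "F 0 = s n" by (simp add: F_def)
    ultimately have "suminf (G (n - 1)) = \<alpha> * suminf (G n) - s n" by simp
    then show ?thesis by (simp add: t_def)
  qed
  ultimately show ?thesis by blast
qed

lemma div_small:
  assumes "SG s" "cmod \<alpha> < 1"
  shows "\<exists>t. SG t \<and> (\<forall>n. t (n - 1) - \<alpha> * t n = s n)"
proof -
  obtain \<rho>0 where r0: "0 < \<rho>0" "\<rho>0 < 1" "\<And>q. q > 1 \<Longrightarrow> \<exists>C\<ge>0. \<forall>n. cmod (s n) \<le> C * wt \<rho>0 q n"
    using SG_D[OF assms(1)] by blast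
  define a where "a = cmod \<alpha>"
  have a: "0 \<le> a" "a < 1" using assms(2) by (auto simp: a_def)
  define \<rho> where "\<rho> = max \<rho>0 ((1 + a) / 2)"
  have r: "0 < \<rho>" "\<rho> < 1" "\<rho>0 \<le> \<rho>" "(1 + a)/2 \<le> \<rho>" using r0 a by (auto simp: \<rho>_def)
  have rb: "\<exists>C\<ge>0. \<forall>n. cmod (s n) \<le> C * wt \<rho> q n" if "q > 1" for q
    using r0(3)[OF that] SG_mono_rho[OF r0(1) r(3)] by blast
  define q0 where "q0 = 2 / (1 + a)"
  have q0: "1 < q0" using a by (simp add: q0_def)
  define \<gamma> where "\<gamma> = max q0 (1/\<rho>)"
  have g1: "a * q0 < 1" using a by (simp add: q0_def field_simps)
  have g2: "a * (1/\<rho>) < 1"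
  proof -
    have "a < (1 + a)/2" using a by simp
    also have "\<dots> \<le> \<rho>" by (rule r(4))
    finally show ?thesis using r by (simp add: field_simps)
  qed
  have ag: "a * \<gamma> < 1" "0 \<le> a * \<gamma>" "0 < \<gamma>" using g1 g2 a q0 r by (auto simp: \<gamma>_def max_def)
  define G where "G n m = \<alpha> ^ m * s (n + 1 + int m)" for n m
  define t where "t n = (\<Sum>m. G n m)" for n
  have key: "summable (G n) \<and> cmod (suminf (G n)) \<le> (C * \<gamma> * wt \<rho> q n) / (1 - a * \<gamma>)"
    if q: "q > 1" "q \<le> q0" and C: "C \<ge> 0" "\<forall>n. cmod (s n) \<le> C * wt \<rho> q n" for q C n
  proof (rule geo_bound)
    fix m
    have "wt \<rho> q (n + int (Suc m)) \<le> max q (1/\<rho>) ^ Suc m * wt \<rho> q n"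
      using r q by (intro wt_shift) auto
    also have "\<dots> \<le> \<gamma> ^ Suc m * wt \<rho> q n"
      using q r wt_pos[of \<rho> q n] by (intro mult_right_mono power_mono) (auto simp: \<gamma>_def)
    finally have "cmod (s (n + 1 + int m)) \<le> C * (\<gamma> ^ Suc m * wt \<rho> q n)" using C
      by (metis (no_types, opaque_lifting) add.assoc mult_left_mono of_nat_Suc order_trans add.commute)
    then have "a ^ m * cmod (s (n + 1 + int m)) \<le> a ^ m * (C * (\<gamma> ^ Suc m * wt \<rho> q n))"
      using a by (intro mult_left_mono) auto
    then show "cmod (G n m) \<le> C * \<gamma> * wt \<rho> q n * (a * \<gamma>) ^ m"
      by (simp add: G_def norm_mult norm_power a_def power_mult_distrib mult_ac)
  qed (use ag in auto)
  obtain C0 where C0: "C0 \<ge> 0" "\<forall>n. cmod (s n) \<le> C0 * wt \<rho> q0 n" using rb[OF q0] by auto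
  have sG: "summable (G n)" for n using key[OF q0 _ C0, of n] by auto
  have "\<exists>C. \<forall>n. cmod (t n) \<le> C * wt \<rho> q n" if q: "q > 1" for q
  proof -
    define q' where "q' = min q q0"
    have q': "q' > 1" "q' \<le> q0" "q' \<le> q" using q q0 by (auto simp: q'_def)
    obtain C where C: "C \<ge> 0" "\<forall>n. cmod (s n) \<le> C * wt \<rho> q' n" using rb[OF q'(1)] by blast
    have "cmod (t n) \<le> (C * \<gamma> / (1 - a * \<gamma>)) * wt \<rho> q n" for n
    proof -
      have "cmod (t n) \<le> (C * \<gamma> / (1 - a * \<gamma>)) * wt \<rho> q' n"
        using key[OF q'(1,2) C, of n] by (simp add: t_def)
      also have "\<dots> \<le> (C * \<gamma> / (1 - a * \<gamma>)) * wt \<rho> q n"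
        using C ag q' by (intro mult_left_mono wt_mono_q) auto
      finally show ?thesis .
    qed
    then show ?thesis by blast
  qed
  then have "SG t" using r unfolding SG_def by blast
  moreover have "t (n - 1) - \<alpha> * t n = s n" for n
  proof -
    define F where "F m = \<alpha> ^ m * s (n + int m)" for m
    have FG: "F = G (n - 1)" by (auto simp: F_def G_def)
    have sF: "summable F" unfolding FG by (rule sG)
    have "(\<Sum>m. F (Suc m)) = suminf F - F 0" by (rule suminf_split_head[OF sF])
    moreover have "(\<lambda>m. F (Suc m)) = (\<lambda>m. \<alpha> * G n m)" by (auto simp: F_def G_def algebra_simps)
    moreover have "(\<Sum>m. \<alpha> * G n m) = \<alpha> * suminf (G n)" by (rule suminf_mult[OF sG])
    moreover have "F 0 = s n" by (simp add: F_def)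
    ultimately have "\<alpha> * t n = t (n - 1) - s n" by (simp add: t_def FG)
    then show ?thesis by simp
  qed
  ultimately show ?thesis by blast
qed



definition pm :: "complex poly \<Rightarrow> (int \<Rightarrow> complex) \<Rightarrow> int \<Rightarrow> complex" where
  "pm P t n = (\<Sum>i\<le>degree P. coeff P i * t (n - int i))"

lemma pm_eq: "degree P < N \<Longrightarrow> pm P t n = (\<Sum>i<N. coeff P i * t (n - int i))"
  unfolding pm_def
  by (rule sum.mono_neutral_left) (auto simp: coeff_eq_0)

lemma pm_pCons: "pm (pCons a p) t n = a * t n + pm p t (n - 1)"
proof -
  have d: "degree (pCons a p) < Suc (Suc (degree p))" using degree_pCons_le[of a p] by simp
  have "pm (pCons a p) t n = (\<Sum>i<Suc (Suc (degree p)). coeff (pCons a p) i * t (n - int i))"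
    by (rule pm_eq[OF d])
  also have "\<dots> = a * t n + (\<Sum>i<Suc (degree p). coeff p i * t (n - 1 - int i))"
    by (subst sum.lessThan_Suc_shift) (simp add: algebra_simps)
  also have "(\<Sum>i<Suc (degree p). coeff p i * t (n - 1 - int i)) = pm p t (n - 1)"
    by (rule pm_eq[symmetric]) simp
  finally show ?thesis .
qed

lemma pm_0[simp]: "pm 0 t n = 0" by (simp add: pm_def)

lemma pm_smult: "pm (smult a p) t n = a * pm p t n"
proof -
  have "pm (smult a p) t n = (\<Sum>i<Suc (degree p). coeff (smult a p) i * t (n - int i))"
    by (rule pm_eq) (use degree_smult_le[of a p] in simp)
  also have "\<dots> = a * (\<Sum>i<Suc (degree p). coeff p i * t (n - int i))"
    by (simp add: sum_distrib_left mult.assoc del: sum.lessThan_Suc)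
  also have "\<dots> = a * pm p t n" using pm_eq[of p "Suc (degree p)" t n] by simp
  finally show ?thesis .
qed

lemma pm_add: "pm (p + q) t n = pm p t n + pm q t n"
proof -
  define N where "N = Suc (max (degree p) (degree q))"
  have "pm (p + q) t n = (\<Sum>i<N. coeff (p + q) i * t (n - int i))"
    by (rule pm_eq) (use degree_add_le[of p "max (degree p) (degree q)" q] in \<open>auto simp: N_def\<close>)
  also have "\<dots> = (\<Sum>i<N. coeff p i * t (n - int i)) + (\<Sum>i<N. coeff q i * t (n - int i))"
    by (simp add: distrib_right sum.distrib)
  also have "\<dots> = pm p t n + pm q t n" using pm_eq[of p N t n] pm_eq[of q N t n] by (simp add: N_def)
  finally show ?thesis .
qed

lemma pm_mult: "pm (p * q) t n = pm p (pm q t) n"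
proof (induction p arbitrary: n rule: pCons_induct)
  case 0 then show ?case by simp
next
  case (pCons a p)
  have "pm (pCons a p * q) t n = a * pm q t n + pm (pCons 0 (p * q)) t n"
    by (simp add: pm_add pm_smult)
  also have "\<dots> = a * pm q t n + pm p (pm q t) (n - 1)" by (simp add: pm_pCons pCons.IH)
  also have "\<dots> = pm (pCons a p) (pm q t) n" by (simp add: pm_pCons)
  finally show ?case .
qed

lemma pm_lin: "pm [:-\<alpha>, 1:] t n = t (n - 1) - \<alpha> * t n"
  by (simp add: pm_pCons)

lemma pm_const: "pm [:c:] t n = c * t n"
  by (simp add: pm_pCons)

lemma solve_aux:
  "\<forall>P::complex poly. degree P = d \<longrightarrow> P \<noteq> 0 \<longrightarrow> (\<forall>z. cmod z = 1 \<longrightarrow> poly P z \<noteq> 0) \<longrightarrow>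
     (\<forall>s. SG s \<longrightarrow> (\<exists>t. SG t \<and> (\<forall>n. pm P t n = s n)))"
proof (induction d rule: less_induct)
  case (less d)
  show ?case
  proof (intro allI impI)
    fix P :: "complex poly" and s
    assume dP: "degree P = d" and P0: "P \<noteq> 0" and hyp: "\<forall>z. cmod z = 1 \<longrightarrow> poly P z \<noteq> 0" and s: "SG s"
    show "\<exists>t. SG t \<and> (\<forall>n. pm P t n = s n)"
    proof (cases "d = 0")
      case True
      then have Pc: "P = [:coeff P 0:]" using degree_0_id[of P] dP by simp
      have c0: "coeff P 0 \<noteq> 0" using P0 Pc by (metis pCons_0_0)
      have "SG (\<lambda>n. (1 / coeff P 0) * s n)" by (rule SG_scale[OF s])
      moreover have "pm P (\<lambda>n. (1 / coeff P 0) * s n) n = s n" for n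
        using c0 by (subst Pc) (simp add: pm_const)
      ultimately show ?thesis by blast
    next
      case False
      then have "\<not> constant (poly P)" using constant_degree[of P] dP by simp
      then obtain \<alpha> where \<alpha>: "poly P \<alpha> = 0" using fundamental_theorem_of_algebra by blast
      then obtain Q where PQ: "P = [:-\<alpha>, 1:] * Q" using poly_eq_0_iff_dvd by (metis dvdE)
      have Q0: "Q \<noteq> 0" using P0 PQ by auto
      have "degree P = degree [:-\<alpha>, 1:] + degree Q" unfolding PQ by (rule degree_mult_eq) (use Q0 in auto)
      then have dQ: "degree Q < d" using dP by simp
      have hQ: "\<forall>z. cmod z = 1 \<longrightarrow> poly Q z \<noteq> 0" using hyp PQ by auto
      have a1: "cmod \<alpha> \<noteq> 1" using hyp \<alpha> by auto
      obtain u where u: "SG u" "\<forall>n. u (n - 1) - \<alpha> * u n = s n"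
        using div_big[OF s, of \<alpha>] div_small[OF s, of \<alpha>] a1 by (cases "cmod \<alpha> < 1") auto
      obtain t where t: "SG t" "\<forall>n. pm Q t n = u n" using less.IH[OF dQ] Q0 hQ u(1) by blast
      have "pm Q t = u" using t(2) by auto
      have "pm P t n = s n" for n
      proof -
        have "pm P t n = pm [:-\<alpha>, 1:] (pm Q t) n" unfolding PQ by (rule pm_mult)
        also have "\<dots> = u (n - 1) - \<alpha> * u n" unfolding \<open>pm Q t = u\<close> by (rule pm_lin)
        finally show ?thesis using u(2) by simp
      qed
      then show ?thesis using t(1) by blast
    qed
  qed
qed

lemma solve:
  assumes "P \<noteq> 0" "\<And>z. cmod z = 1 \<Longrightarrow> poly P z \<noteq> 0" "SG s"
  shows "\<exists>t. SG t \<and> (\<forall>n. pm P t n = s n)"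
  using solve_aux[of "degree P"] assms by blast



lemma growth_of_limsup:
  fixes x :: "nat \<Rightarrow> real"
  assumes "limsup (\<lambda>n. ereal (root n \<bar>x n\<bar>)) \<le> 1" "q > 1"
  shows "\<exists>C. \<forall>n. \<bar>x n\<bar> \<le> C * q ^ n"
proof -
  have "limsup (\<lambda>n. ereal (root n \<bar>x n\<bar>)) < ereal q" 
  proof -
    have "ereal 1 < ereal q" using assms(2) by simp
    then show ?thesis using assms(1) by (metis le_less_trans one_ereal_def)
  qed
  then have "eventually (\<lambda>n. ereal (root n \<bar>x n\<bar>) < ereal q) sequentially" by (rule Limsup_lessD)
  then obtain N where N: "\<And>n. n \<ge> N \<Longrightarrow> root n \<bar>x n\<bar> < q" by (auto simp: eventually_sequentially)
  define C where "C = 1 + (\<Sum>n\<le>N. \<bar>x n\<bar>)"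
  have C1: "C \<ge> 1" by (simp add: C_def sum_nonneg)
  have "\<bar>x n\<bar> \<le> C * q ^ n" for n
  proof (cases "n \<le> N")
    case True
    have "\<bar>x n\<bar> \<le> (\<Sum>n\<le>N. \<bar>x n\<bar>)" by (rule member_le_sum) (use True in auto)
    also have "\<dots> \<le> C" by (simp add: C_def)
    also have "C \<le> C * q ^ n" using C1 assms(2) by (simp add: one_le_power)
    finally show ?thesis .
  next
    case False
    then have n0: "n > 0" by simp
    have "\<bar>x n\<bar> = root n \<bar>x n\<bar> ^ n" using n0 by simp
    also have "\<dots> \<le> q ^ n" using N[of n] False by (intro power_mono) auto
    also have "\<dots> \<le> C * q ^ n" using C1 assms(2) by simp
    finally show ?thesis .
  qed
  then show ?thesis by blast
qed

lemma limsup_of_growth: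
  fixes x :: "nat \<Rightarrow> real"
  assumes "\<And>q. q > 1 \<Longrightarrow> \<exists>C. \<forall>n. \<bar>x n\<bar> \<le> C * q ^ n"
  shows "limsup (\<lambda>n. ereal (root n \<bar>x n\<bar>)) \<le> 1"
proof -
  have le: "limsup (\<lambda>n. ereal (root n \<bar>x n\<bar>)) \<le> ereal q" if q: "q > 1" for q
  proof -
    obtain C where C: "\<forall>n. \<bar>x n\<bar> \<le> C * q ^ n" using assms[OF q] by blast
    define C' where "C' = max C 1"
    have C': "C' > 0" "\<forall>n. \<bar>x n\<bar> \<le> C' * q ^ n" using C q
      by (auto simp: C'_def) (meson max.cobounded1 mult_right_mono order_trans zero_le_power less_le_not_le order.strict_trans zero_less_one)
    have ev: "eventually (\<lambda>n. ereal (root n \<bar>x n\<bar>) \<le> ereal (root n C' * q)) sequentially"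
      unfolding eventually_sequentially
    proof (intro exI[of _ 1] allI impI)
      fix n :: nat assume n: "n \<ge> 1"
      have "root n \<bar>x n\<bar> \<le> root n (C' * q ^ n)" using n C' by (subst real_root_le_iff) auto
      also have "\<dots> = root n C' * q" using n q by (simp add: real_root_mult real_root_pos_unique)
      finally show "ereal (root n \<bar>x n\<bar>) \<le> ereal (root n C' * q)" by simp
    qed
    have "(\<lambda>n. root n C' * q) \<longlonglongrightarrow> 1 * q" by (intro tendsto_mult LIMSEQ_root_const C' tendsto_const)
    then have lim: "(\<lambda>n. ereal (root n C' * q)) \<longlonglongrightarrow> ereal q" by (simp add: tendsto_ereal)
    have "limsup (\<lambda>n. ereal (root n \<bar>x n\<bar>)) \<le> limsup (\<lambda>n. ereal (root n C' * q))" by (rule Limsup_mono[OF ev])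
    also have "\<dots> = ereal q" by (rule lim_imp_Limsup[OF _ lim]) simp
    finally show ?thesis .
  qed
  show ?thesis
  proof (rule ccontr)
    assume "\<not> ?thesis"
    then have "1 < limsup (\<lambda>n. ereal (root n \<bar>x n\<bar>))" by simp
    then obtain z where z: "1 < ereal z" "ereal z < limsup (\<lambda>n. ereal (root n \<bar>x n\<bar>))" using ereal_dense2 by blast
    then have "z > 1" by simp
    from le[OF this] z(2) show False by simp
  qed
qed

lemma round_small: "\<bar>x::real\<bar> < 1/2 \<Longrightarrow> round x = 0"
  unfolding round_def by (simp add: floor_eq_iff) linarith

lemma SG_round:
  assumes "SG h"
  shows "almost_convergent (\<lambda>n. round (Re (h n))) \<and> (\<exists>k. \<forall>i<k. round (Re (h i)) = 0)"
proof -
  obtain \<rho> where r: "0 < \<rho>" "\<rho> < 1" "\<And>q. q > 1 \<Longrightarrow> \<exists>C\<ge>0. \<forall>n. cmod (h n) \<le> C * wt \<rho> q n"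
    using SG_D[OF assms(1)] by blast
  have rb: "\<bar>real_of_int (round (Re (h n)))\<bar> \<le> cmod (h n) + 1" for n
    using of_int_round_abs_le[of "Re (h n)"] abs_Re_le_cmod[of "h n"] by linarith
  have g: "\<exists>C. \<forall>m. \<bar>real_of_int (round (Re (h (e * int m))))\<bar> \<le> C * q ^ m"
    if q: "q > 1" and e: "e = 1 \<or> e = -1" for q e
  proof -
    obtain C where C: "C \<ge> 0" "\<forall>n. cmod (h n) \<le> C * wt \<rho> q n" using r(3)[OF q] by blast
    have "\<bar>real_of_int (round (Re (h (e * int m))))\<bar> \<le> (C + 1) * q ^ m" for m
    proof -
      have w: "wt \<rho> q (e * int m) \<le> q ^ m"
        using e q r by (auto simp: wt_def one_le_power power_le_one intro: order_trans[of _ 1])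
      have "\<bar>real_of_int (round (Re (h (e * int m))))\<bar> \<le> C * wt \<rho> q (e * int m) + 1"
        using rb C by (meson add_right_mono order_trans)
      also have "\<dots> \<le> C * q ^ m + q ^ m" using C w q by (intro add_mono mult_left_mono one_le_power) auto
      finally show ?thesis by (simp add: algebra_simps)
    qed
    then show ?thesis by blast
  qed
  have ac: "almost_convergent (\<lambda>n. round (Re (h n)))"
    unfolding almost_convergent_def
    using limsup_of_growth[of "\<lambda>m. real_of_int (round (Re (h (1 * int m))))"]
          limsup_of_growth[of "\<lambda>m. real_of_int (round (Re (h ((-1) * int m))))"] 
          g[of _ 1] g[of _ "-1"] by simp
  obtain C where C: "C \<ge> 0" "\<forall>n. cmod (h n) \<le> C * wt \<rho> 2 n" using r(3)[of 2] by auto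
  obtain M where M: "\<rho> ^ M < 1 / (2 * (C + 1))" using real_arch_pow_inv[of "1 / (2 * (C + 1))" \<rho>] r C by auto
  have "round (Re (h i)) = 0" if i: "i < - int M" for i
  proof -
    have "cmod (h i) \<le> C * \<rho> ^ nat (-i)" using C(2)[rule_format, of i] i by (simp add: wt_def)
    also have "\<dots> \<le> C * \<rho> ^ M" using r C i by (intro mult_left_mono power_decreasing) auto
    also have "\<dots> \<le> (C + 1) * \<rho> ^ M" using r by (intro mult_right_mono) auto
    also have "\<dots> < (C + 1) * (1 / (2 * (C + 1)))" using M C by (intro mult_strict_left_mono) auto
    also have "\<dots> = 1/2" using C by simp
    finally have "\<bar>Re (h i)\<bar> < 1/2" using abs_Re_le_cmod[of "h i"] by linarith
    then show ?thesis by (rule round_small)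
  qed
  then show ?thesis using ac by blast
qed

lemma SG_of_int:
  assumes "\<And>q. q > 1 \<Longrightarrow> \<exists>C. \<forall>n::nat. \<bar>real_of_int (c (int n))\<bar> \<le> C * q ^ n" "\<forall>i<k. c i = 0"
  shows "SG (\<lambda>n. of_int (c n))"
proof -
  define C2 where "C2 = (\<Sum>j\<in>{k..<0}. \<bar>real_of_int (c j)\<bar> * 2 ^ nat (-j))"
  have C2: "C2 \<ge> 0" by (simp add: C2_def sum_nonneg)
  have "\<exists>C. \<forall>n. cmod (of_int (c n)) \<le> C * wt (1/2) q n" if q: "q > 1" for q
  proof -
    obtain C1 where C1: "\<forall>n::nat. \<bar>real_of_int (c (int n))\<bar> \<le> C1 * q ^ n" using assms(1)[OF q] by blast
    have "cmod (of_int (c n)) \<le> (\<bar>C1\<bar> + C2) * wt (1/2) q n" for n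
    proof -
      have wp: "wt (1/2) q n > 0" using q by (intro wt_pos) auto
      consider "0 \<le> n" | "n < k" | "k \<le> n" "n < 0" by linarith
      then show ?thesis
      proof cases
        case 1
        then obtain m where m: "n = int m" by (metis nonneg_int_cases)
        have "\<bar>real_of_int (c n)\<bar> \<le> C1 * q ^ m" using C1 m by simp
        also have "\<dots> \<le> \<bar>C1\<bar> * q ^ m" using q by (intro mult_right_mono) auto
        also have "\<dots> \<le> (\<bar>C1\<bar> + C2) * q ^ m" using q C2 by (intro mult_right_mono) auto
        finally show ?thesis using m by (simp add: wt_def)
      next
        case 2 then show ?thesis using assms(2) C2 wp by simp
      next
        case 3
        have "\<bar>real_of_int (c n)\<bar> = (\<bar>real_of_int (c n)\<bar> * 2 ^ nat (-n)) * (1/2) ^ nat (-n)"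
          by (simp add: power_one_over)
        also have "\<dots> \<le> C2 * (1/2) ^ nat (-n)" unfolding C2_def
          by (intro mult_right_mono member_le_sum) (use 3 in auto)
        also have "\<dots> \<le> (\<bar>C1\<bar> + C2) * (1/2) ^ nat (-n)" by (intro mult_right_mono) auto
        finally show ?thesis using 3 by (simp add: wt_def)
      qed
    qed
    then show ?thesis by blast
  qed
  then show ?thesis unfolding SG_def by (intro exI[of _ "1/2"]) auto
qed



lemma Zac_SG:
  assumes "g \<in> Zac"
  shows "SG (\<lambda>n. of_int (g n))"
proof -
  obtain k where k: "\<forall>i<k. g i = 0" using assms by (auto simp: Zac_def)
  have ac: "almost_convergent g" using assms by (auto simp: Zac_def)
  show ?thesis
    by (rule SG_of_int[OF _ k], rule growth_of_limsup) (use ac in \<open>auto simp: almost_convergent_def\<close>)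
qed

lemma lp_zero:
  assumes "\<forall>i<k2. g i = 0" "\<forall>i. f i \<noteq> 0 \<longrightarrow> L \<le> i" "n < k2 + L"
  shows "lp_mult f g n = 0"
  unfolding lp_mult_def using assms by (intro sum.neutral) force

theorem mainTheorem5:
  fixes f :: "int \<Rightarrow> int"
  assumes "laurent_poly f" and "f \<noteq> (\<lambda>_. 0)" and "hyperbolic f"
  shows "\<exists>N::nat. {(\<lambda>n. b n + lp_mult f g n) | b g. b \<in> B_inf N \<and> g \<in> Zac} = Zac"
proof -
  define A where "A = {i. f i \<noteq> 0}"
  have fA: "finite A" using assms(1) by (simp add: A_def laurent_poly_def)
  define K0 where "K0 = Max (insert 0 (abs ` A))"
  have K0: "\<And>i. i \<in> A \<Longrightarrow> \<bar>i\<bar> \<le> K0" "0 \<le> K0" using fA by (auto simp: K0_def)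
  define L where "L = - K0"
  define M where "M = nat (2 * K0 + 1)"
  have LA: "\<forall>i. f i \<noteq> 0 \<longrightarrow> L \<le> i" using K0 by (force simp: L_def A_def)
  have reidx: "(\<Sum>i\<in>A. F i) = (\<Sum>j<M. F (L + int j))" if F: "\<And>i. f i = 0 \<Longrightarrow> F i = 0" for F :: "int \<Rightarrow> 'a::comm_monoid_add"
  proof -
    have inj: "inj_on (\<lambda>j. L + int j) {..<M}" by (auto simp: inj_on_def)
    have sub: "A \<subseteq> (\<lambda>j. L + int j) ` {..<M}"
    proof
      fix i assume i: "i \<in> A"
      then have "L + int (nat (i - L)) = i" "nat (i - L) < M" using K0(1)[OF i] K0(2) by (auto simp: L_def M_def)
      then show "i \<in> (\<lambda>j. L + int j) ` {..<M}" by (metis imageI lessThan_iff)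
    qed
    have "(\<Sum>j<M. F (L + int j)) = (\<Sum>i\<in>(\<lambda>j. L + int j) ` {..<M}. F i)" by (simp add: sum.reindex[OF inj])
    also have "\<dots> = (\<Sum>i\<in>A. F i)" by (rule sum.mono_neutral_right) (use sub F in \<open>auto simp: A_def\<close>)
    finally show ?thesis by simp
  qed
  define P :: "complex poly" where "P = (\<Sum>i<M. monom (of_int (f (L + int i))) i)"
  have cP: "coeff P j = (if j < M then of_int (f (L + int j)) else 0)" for j
    by (simp add: P_def coeff_sum coeff_monom)
  have M1: "M \<ge> 1" using K0 by (simp add: M_def)
  have dP: "degree P < M"
  proof -
    have "degree P \<le> M - 1" by (rule degree_le) (use M1 in \<open>auto simp: cP\<close>)
    then show ?thesis using M1 by simp
  qed
  have pmP: "pm P u n = (\<Sum>i\<in>A. of_int (f i) * u (n - i + L))" for u n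
  proof -
    have "pm P u n = (\<Sum>j<M. coeff P j * u (n - int j))" by (rule pm_eq[OF dP])
    also have "\<dots> = (\<Sum>j<M. of_int (f (L + int j)) * u (n - (L + int j) + L))" by (simp add: cP)
    also have "\<dots> = (\<Sum>i\<in>A. of_int (f i) * u (n - i + L))" by (rule reidx[symmetric]) simp
    finally show ?thesis .
  qed
  have polyP: "poly P z = (\<Sum>j<M. of_int (f (L + int j)) * z ^ j)" for z
    by (simp add: P_def poly_sum poly_monom)
  have hypP: "poly P z \<noteq> 0" if z: "cmod z = 1" for z
  proof -
    have z0: "z \<noteq> 0" using z by auto
    have "lp_eval f z = (\<Sum>j<M. of_int (f (L + int j)) * z powi (L + int j))"
      unfolding lp_eval_def A_def[symmetric] by (rule reidx) simp
    also have "\<dots> = z powi L * poly P z" using z0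
      by (simp add: polyP sum_distrib_left power_int_add mult_ac)
    finally have "lp_eval f z = z powi L * poly P z" .
    moreover have "lp_eval f z \<noteq> 0" using assms(3) z by (simp add: hyperbolic_def)
    ultimately show ?thesis by auto
  qed
  have P0: "P \<noteq> 0"
  proof -
    obtain i0 where i0: "f i0 \<noteq> 0" using assms(2) by auto
    then have "i0 \<in> A" by (simp add: A_def)
    then have "\<bar>i0\<bar> \<le> K0" by (rule K0(1))
    then have "nat (i0 - L) < M" "L + int (nat (i0 - L)) = i0" by (auto simp: L_def M_def)
    then have "coeff P (nat (i0 - L)) \<noteq> 0" using i0 by (simp add: cP)
    then show ?thesis by auto
  qed
  define N where "N = nat (\<Sum>i\<in>A. \<bar>f i\<bar>)"
  show ?thesis
  proof (intro exI[of _ N] equalityI subsetI)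
    fix x assume "x \<in> {(\<lambda>n. b n + lp_mult f g n) | b g. b \<in> B_inf N \<and> g \<in> Zac}"
    then obtain b g k where x: "x = (\<lambda>n. b n + lp_mult f g n)" and b: "b \<in> B k N" and g: "g \<in> Zac"
      by (auto simp: B_inf_def)
    have bb: "\<forall>i. \<bar>b i\<bar> \<le> int N" "\<forall>i < - int k. b i = 0" using b by (auto simp: B_def)
    obtain k2 where k2: "\<forall>i<k2. g i = 0" using g by (auto simp: Zac_def)
    have SGb: "SG (\<lambda>n. of_int (b n))"
    proof (rule SG_of_int[OF _ bb(2)])
      fix q :: real assume q: "q > 1"
      have "\<bar>real_of_int (b (int n))\<bar> \<le> real N * q ^ n" for n
      proof -
        have "\<bar>real_of_int (b (int n))\<bar> \<le> real N" using bb(1) by (metis of_int_abs of_int_le_iff of_int_of_nat_eq)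
        also have "\<dots> \<le> real N * q ^ n" using mult_left_mono[of 1 "q ^ n" "real N"] one_le_power[of q n] q by simp
        finally show ?thesis .
      qed
      then show "\<exists>C. \<forall>n. \<bar>real_of_int (b (int n))\<bar> \<le> C * q ^ n" by blast
    qed
    have SGg: "SG (\<lambda>n. of_int (g n))" by (rule Zac_SG[OF g])
    have "SG (\<lambda>n. of_int (b n) + (\<Sum>i\<in>A. of_int (f i) * of_int (g (n + - i))))"
      by (intro SG_add SGb SG_sum fA SG_scale SG_shift[of "\<lambda>n. of_int (g n)", simplified] SGg)
    moreover have "(\<lambda>n. of_int (b n) + (\<Sum>i\<in>A. of_int (f i) * of_int (g (n + - i)))) = (\<lambda>n. of_int (x n) :: complex)"
      by (auto simp: x lp_mult_def A_def)
    ultimately have "SG (\<lambda>n. of_int (x n))" by simp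
    from SG_round[OF this] have ac: "almost_convergent x" by simp
    have "x i = 0" if "i < min (- int k) (k2 + L)" for i
      using that bb(2) lp_zero[OF k2 LA, of i] by (simp add: x)
    then show "x \<in> Zac" using ac unfolding Zac_def by (intro CollectI conjI exI[of _ "min (- int k) (k2 + L)"]) auto
  next
    fix c assume c: "c \<in> Zac"
    obtain k1 where k1: "\<forall>i<k1. c i = 0" using c by (auto simp: Zac_def)
    obtain h where h: "SG h" "\<forall>n. pm P h n = of_int (c n)" using solve[OF P0 hypP Zac_SG[OF c]] by blast
    define h' where "h' m = h (m + L)" for m
    have SGh': "SG h'" unfolding h'_def by (rule SG_shift[OF h(1)])
    define g where "g m = round (Re (h' m))" for m
    have gr: "almost_convergent g \<and> (\<exists>k. \<forall>i<k. g i = 0)" unfolding g_def by (rule SG_round[OF SGh'])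
    then have gZ: "g \<in> Zac" by (simp add: Zac_def)
    obtain k2 where k2: "\<forall>i<k2. g i = 0" using gr by blast
    define b where "b n = c n - lp_mult f g n" for n
    have cid: "real_of_int (c n) = (\<Sum>i\<in>A. real_of_int (f i) * Re (h' (n - i)))" for n
    proof -
      have "(of_int (c n) :: complex) = (\<Sum>i\<in>A. of_int (f i) * h' (n - i))"
        using h(2) pmP[of h n] by (simp add: h'_def)
      then have "Re (of_int (c n)) = Re (\<Sum>i\<in>A. of_int (f i) * h' (n - i))" by simp
      then show ?thesis by (simp add: Re_sum)
    qed
    have bid: "real_of_int (b n) = (\<Sum>i\<in>A. real_of_int (f i) * (Re (h' (n - i)) - real_of_int (g (n - i))))" for n
      by (simp add: b_def cid lp_mult_def A_def[symmetric] right_diff_distrib sum_subtractf)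
    have bbound: "\<bar>b n\<bar> \<le> int N" for n
    proof -
      have "\<bar>real_of_int (b n)\<bar> \<le> (\<Sum>i\<in>A. \<bar>real_of_int (f i) * (Re (h' (n - i)) - real_of_int (g (n - i)))\<bar>)"
        unfolding bid by (rule sum_abs)
      also have "\<dots> \<le> (\<Sum>i\<in>A. \<bar>real_of_int (f i)\<bar>)"
      proof (rule sum_mono)
        fix i
        have "\<bar>Re (h' (n - i)) - real_of_int (g (n - i))\<bar> \<le> 1"
          using of_int_round_abs_le[of "Re (h' (n - i))"] unfolding g_def by linarith
        then show "\<bar>real_of_int (f i) * (Re (h' (n - i)) - real_of_int (g (n - i)))\<bar> \<le> \<bar>real_of_int (f i)\<bar>"
          by (simp add: abs_mult mult_left_le)
      qed
      finally have "\<bar>real_of_int (b n)\<bar> \<le> real_of_int (\<Sum>i\<in>A. \<bar>f i\<bar>)" by simp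
      then have "\<bar>b n\<bar> \<le> (\<Sum>i\<in>A. \<bar>f i\<bar>)" by linarith
      then show ?thesis by (simp add: N_def)
    qed
    define kk where "kk = nat (- min k1 (k2 + L))"
    have bz: "\<forall>i < - int kk. b i = 0"
    proof (intro allI impI)
      fix i assume "i < - int kk"
      then have "i < min k1 (k2 + L)" unfolding kk_def by (cases "min k1 (k2 + L) \<le> 0") auto
      then show "b i = 0" using k1 lp_zero[OF k2 LA, of i] by (simp add: b_def)
    qed
    have "b \<in> B_inf N" unfolding B_inf_def B_def using bbound bz by blast
    moreover have "c = (\<lambda>n. b n + lp_mult f g n)" by (simp add: b_def)
    ultimately show "c \<in> {(\<lambda>n. b n + lp_mult f g n) | b g. b \<in> B_inf N \<and> g \<in> Zac}" using gZ by blast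
  qed
qed

end
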